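(* Let $F_n=f_1\cdots f_n$ be a composition sequence generated by a finite subset of $\mathcal{M}(\mathbb{D})$, and suppose there are points $z_0,z_1,z_2,\dots$ on $\partial\mathbb{D}$ with $f_n(z_n)=z_{n-1}$ for each $n\ge1$. Let $\gamma_n=1/|f_n'(z_n)|$. Then $(F_n)$ is of limit-disc type if and only if $\sum_{n=1}^\infty\gamma_1\gamma_2\cdots\gamma_n<+\infty$. Furthermore, if $(F_n)$ is of limit-disc type and converges ideally to a point $q$, then $q\neq z_0$.
   Context: $\mathbb{D}$ is the open unit disc; $\mathcal{M}(\mathbb{D})$ is the set of Möbius transformations $f$ with $f(\mathbb{D})\subset\mathbb{D}$, $f(\mathbb{D})\neq\mathbb{D}$. $(F_n)$ is of limit-disc type if $\bigcap_n F_n(\overline{\mathbb{D}})$ is a closed disc of positive radius rather than a single point. Möbius maps act on $\mathbb{H}^3=\{(x,y,t):t>0\}$ via Poincaré extension, $j=(0,0,1)$; $(F_n)$ converges ideally to $q\in\overline{\mathbb{C}}$ if $F_n(j)\to q$ in the chordal metric. *)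

theory Defs
  imports "HOL-Analysis.Analysis"
begin

text \<open>A Moebius transformation z |-> (a z + b)/(c z + d) is represented by its
  coefficient tuple (a,b,c,d) with a d - b c nonzero.\<close>
type_synonym mob = "complex \<times> complex \<times> complex \<times> complex"

fun is_mob :: "mob \<Rightarrow> bool" where
  "is_mob (a, b, c, d) \<longleftrightarrow> a * d - b * c \<noteq> 0"

fun mob_fun :: "mob \<Rightarrow> complex \<Rightarrow> complex" where
  "mob_fun (a, b, c, d) z = (a * z + b) / (c * z + d)"

text \<open>M(D): Moebius maps f with f(D) a subset of D (in particular no pole in D,
  since the pole is sent to infinity) and f(D) different from D.\<close>
fun in_MD :: "mob \<Rightarrow> bool" where
  "in_MD (a, b, c, d) \<longleftrightarrow> is_mob (a, b, c, d)
     \<and> (\<forall>z\<in>ball 0 1. c * z + d \<noteq> 0 \<and> mob_fun (a, b, c, d) z \<in> ball 0 1)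
     \<and> mob_fun (a, b, c, d) ` ball 0 1 \<noteq> ball 0 1"

text \<open>Composition sequence F_n = f_1 o ... o f_n (index 0 of f unused).\<close>
fun comp_seq :: "(nat \<Rightarrow> mob) \<Rightarrow> nat \<Rightarrow> complex \<Rightarrow> complex" where
  "comp_seq f 0 = id"
| "comp_seq f (Suc n) = comp_seq f n \<circ> mob_fun (f (Suc n))"

definition limit_disc_type :: "(nat \<Rightarrow> mob) \<Rightarrow> bool" where
  "limit_disc_type f \<longleftrightarrow>
     (\<exists>c r. r > 0 \<and> (\<Inter>n\<in>{1..}. comp_seq f n ` cball 0 1) = cball c r)"

text \<open>Poincare extension to upper half-space H^3 = {(z,t). t > 0} (points as
  complex x real).\<close>
fun poincare_ext :: "mob \<Rightarrow> complex \<times> real \<Rightarrow> complex \<times> real" where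
  "poincare_ext (a, b, c, d) (z, t) =
     (let N = (cmod (c * z + d))\<^sup>2 + (cmod c)\<^sup>2 * t\<^sup>2 in
      (((a * z + b) * cnj (c * z + d) + a * cnj c * complex_of_real (t\<^sup>2)) / complex_of_real N,
       cmod (a * d - b * c) * t / N))"

fun ext_comp_seq :: "(nat \<Rightarrow> mob) \<Rightarrow> nat \<Rightarrow> complex \<times> real \<Rightarrow> complex \<times> real" where
  "ext_comp_seq f 0 = id"
| "ext_comp_seq f (Suc n) = ext_comp_seq f n \<circ> poincare_ext (f (Suc n))"

text \<open>Chordal metric on R^3 \<union> {\<infinity>}; None is the point at infinity.\<close>
definition sqnorm3 :: "complex \<times> real \<Rightarrow> real" where
  "sqnorm3 p = (cmod (fst p))\<^sup>2 + (snd p)\<^sup>2"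

fun chordal :: "(complex \<times> real) option \<Rightarrow> (complex \<times> real) option \<Rightarrow> real" where
  "chordal (Some p) (Some q) =
     2 * sqrt ((cmod (fst p - fst q))\<^sup>2 + (snd p - snd q)\<^sup>2)
       / sqrt ((1 + sqnorm3 p) * (1 + sqnorm3 q))"
| "chordal (Some p) None = 2 / sqrt (1 + sqnorm3 p)"
| "chordal None (Some q) = 2 / sqrt (1 + sqnorm3 q)"
| "chordal None None = 0"

text \<open>Extended complex plane: None = \<infinity>; embedded as boundary of H^3.\<close>
fun embed_ext :: "complex option \<Rightarrow> (complex \<times> real) option" where
  "embed_ext (Some z) = Some (z, 0)"
| "embed_ext None = None"

definition converges_ideally :: "(nat \<Rightarrow> mob) \<Rightarrow> complex option \<Rightarrow> bool" where
  "converges_ideally f q \<longleftrightarrow>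
     (\<lambda>n. chordal (Some (ext_comp_seq f n (0, 1))) (embed_ext q)) \<longlonglongrightarrow> 0"

end

theory Submission
  imports Defs
begin
lemma I1:
  fixes a b c d a' b' c' d' x ss :: complex
  assumes "cnj ss = ss"
  defines "X \<equiv> (a'*x+b')*cnj(c'*x+d') + a'*cnj c' * ss"
  defines "D1 \<equiv> (c'*x+d')*cnj(c'*x+d') + c'*cnj c' * ss"
  defines "T2 \<equiv> (a'*d'-b'*c')*cnj(a'*d'-b'*c') * ss"
  shows "(c*X+d*D1)*cnj(c*X+d*D1) + c*cnj c*T2 = D1 * (((c*a'+d*c')*x + (c*b'+d*d'))*cnj((c*a'+d*c')*x + (c*b'+d*d')) + (c*a'+d*c')*cnj(c*a'+d*c')* ss)"
  unfolding X_def D1_def T2_def using assms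
  by (simp add: algebra_simps)
lemma I2:
  fixes a b c d a' b' c' d' x ss :: complex
  assumes "cnj ss = ss"
  defines "X \<equiv> (a'*x+b')*cnj(c'*x+d') + a'*cnj c' * ss"
  defines "D1 \<equiv> (c'*x+d')*cnj(c'*x+d') + c'*cnj c' * ss"
  defines "T2 \<equiv> (a'*d'-b'*c')*cnj(a'*d'-b'*c') * ss"
  shows "(a*X+b*D1)*cnj(c*X+d*D1) + a*cnj c*T2 = D1 * (((a*a'+b*c')*x + (a*b'+b*d'))*cnj((c*a'+d*c')*x + (c*b'+d*d')) + (a*a'+b*c')*cnj(c*a'+d*c')* ss)"
  unfolding X_def D1_def T2_def using assms
  by (simp add: algebra_simps)

lemma ext_mult:
  assumes D1: "(cmod(c'*x+d'))\<^sup>2 + (cmod c')\<^sup>2*t\<^sup>2 \<noteq> 0"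
   and NM: "(cmod((c*a'+d*c')*x+(c*b'+d*d')))\<^sup>2 + (cmod(c*a'+d*c'))\<^sup>2*t\<^sup>2 \<noteq> 0"
  shows "poincare_ext (a,b,c,d) (poincare_ext (a',b',c',d') (x,t))
       = poincare_ext (a*a'+b*c', a*b'+b*d', c*a'+d*c', c*b'+d*d') (x,t)"
proof -
  define D where "D = (cmod(c'*x+d'))\<^sup>2 + (cmod c')\<^sup>2*t\<^sup>2"
  define X where "X = (a'*x+b')*cnj(c'*x+d') + a'*cnj c' * complex_of_real (t\<^sup>2)"
  define T where "T = cmod (a'*d'-b'*c') * t"
  define N where "N = (cmod((c*a'+d*c')*x+(c*b'+d*d')))\<^sup>2 + (cmod(c*a'+d*c'))\<^sup>2*t\<^sup>2"
  have Dc: "complex_of_real D = (c'*x+d')*cnj(c'*x+d') + c'*cnj c' * complex_of_real (t\<^sup>2)"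
    unfolding D_def by (simp only: of_real_add of_real_mult complex_norm_square)
  have T2: "complex_of_real (T\<^sup>2) = (a'*d'-b'*c')*cnj(a'*d'-b'*c') * complex_of_real (t\<^sup>2)"
    unfolding T_def by (simp only: power_mult_distrib of_real_mult complex_norm_square)
  have Nc: "complex_of_real N = ((c*a'+d*c')*x + (c*b'+d*d'))*cnj((c*a'+d*c')*x + (c*b'+d*d')) + (c*a'+d*c')*cnj(c*a'+d*c')*complex_of_real (t\<^sup>2)"
    unfolding N_def by (simp only: of_real_add of_real_mult complex_norm_square)
  have e1: "complex_of_real ((cmod (c*X + d*D))\<^sup>2 + (cmod c)\<^sup>2 * T\<^sup>2) = complex_of_real (D * N)"
    using I1[where ss="complex_of_real (t\<^sup>2)" and a'=a' and x=x and b'=b' and c'=c' and d'=d' and c=c and d=d, OF complex_cnj_complex_of_real]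
    by (simp only: of_real_add of_real_mult complex_norm_square T2 Dc Nc X_def)
  hence e1': "(cmod (c*X + d*D))\<^sup>2 + (cmod c)\<^sup>2 * T\<^sup>2 = D * N" using of_real_eq_iff by blast
  have e2: "(a*X+b*D)*cnj(c*X+d*D) + a*cnj c*complex_of_real (T\<^sup>2) = D * (((a*a'+b*c')*x + (a*b'+b*d'))*cnj((c*a'+d*c')*x + (c*b'+d*d')) + (a*a'+b*c')*cnj(c*a'+d*c')*complex_of_real (t\<^sup>2))"
    using I2[where ss="complex_of_real (t\<^sup>2)" and a'=a' and x=x and b'=b' and c'=c' and d'=d' and a=a and b=b and c=c and d=d, OF complex_cnj_complex_of_real] by (simp only: T2 Dc X_def)
  have Dnz: "D \<noteq> 0" using D1 D_def by simp
  have Nnz: "N \<noteq> 0" using NM N_def by simp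
  have inner: "poincare_ext (a',b',c',d') (x,t) = (X / complex_of_real D, T / D)"
    by (simp add: Let_def D_def X_def T_def)
  have cz: "c * (X / complex_of_real D) + d = (c*X + d*D) / complex_of_real D"
    using Dnz by (simp add: field_simps)
  have az: "a * (X / complex_of_real D) + b = (a*X + b*D) / complex_of_real D"
    using Dnz by (simp add: field_simps)
  have N2: "(cmod (c * (X / complex_of_real D) + d))\<^sup>2 + (cmod c)\<^sup>2 * (T/D)\<^sup>2 = N / D"
  proof -
    have "(cmod (c * (X / complex_of_real D) + d))\<^sup>2 + (cmod c)\<^sup>2 * (T/D)\<^sup>2
        = ((cmod (c*X + d*D))\<^sup>2 + (cmod c)\<^sup>2 * T\<^sup>2) / D\<^sup>2"
      unfolding cz norm_divide norm_of_real using Dnz by (simp add: power_divide add_divide_distrib)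
    also have "\<dots> = N / D" using e1' Dnz by (simp add: power2_eq_square)
    finally show ?thesis .
  qed
  have det: "cmod (a*d-b*c) * cmod (a'*d'-b'*c') = cmod ((a*a'+b*c')*(c*b'+d*d') - (a*b'+b*d')*(c*a'+d*c'))"
  proof -
    have "(a*a'+b*c')*(c*b'+d*d') - (a*b'+b*d')*(c*a'+d*c') = (a*d-b*c)*(a'*d'-b'*c')" by (simp add: algebra_simps)
    thus ?thesis by (simp add: norm_mult)
  qed
  show ?thesis
    unfolding inner
    apply (simp only: poincare_ext.simps Let_def N2 prod.inject)
    apply (intro conjI)
    subgoal
    proof -
      have "(a * (X / complex_of_real D) + b) * cnj (c * (X / complex_of_real D) + d) + a * cnj c * complex_of_real ((T / D)\<^sup>2)
         = ((a*X+b*D)*cnj(c*X+d*D) + a*cnj c*complex_of_real (T\<^sup>2)) / complex_of_real (D\<^sup>2)"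
        unfolding az cz using Dnz by (simp add: field_simps power2_eq_square)
      also have "\<dots> = complex_of_real D * (((a*a'+b*c')*x + (a*b'+b*d'))*cnj((c*a'+d*c')*x + (c*b'+d*d')) + (a*a'+b*c')*cnj(c*a'+d*c')*complex_of_real (t\<^sup>2)) / complex_of_real (D\<^sup>2)"
        unfolding e2 ..
      finally show ?thesis using Dnz Nnz unfolding N_def[symmetric] by (simp add: field_simps power2_eq_square)
    qed
    subgoal using Dnz Nnz det unfolding N_def[symmetric] T_def by (simp add: field_simps)
    done
qed

fun mmul :: "mob \<Rightarrow> mob \<Rightarrow> mob" where
  "mmul (a,b,c,d) (a',b',c',d') = (a*a'+b*c', a*b'+b*d', c*a'+d*c', c*b'+d*d')"

fun smul :: "complex \<Rightarrow> mob \<Rightarrow> mob" where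
  "smul k (a,b,c,d) = (k*a, k*b, k*c, k*d)"

lemma mob_comp:
  assumes "c'*z+d' \<noteq> 0"
  shows "mob_fun (a,b,c,d) (mob_fun (a',b',c',d') z) = mob_fun (mmul (a,b,c,d) (a',b',c',d')) z"
proof -
  have e: "c*((a'*z+b')/(c'*z+d'))+d = ((c*a'+d*c')*z+(c*b'+d*d'))/(c'*z+d')"
    using assms by (simp add: divide_simps) (simp add: algebra_simps)
  have e2: "a*((a'*z+b')/(c'*z+d'))+b = ((a*a'+b*c')*z+(a*b'+b*d'))/(c'*z+d')"
    using assms by (simp add: divide_simps) (simp add: algebra_simps)
  show ?thesis using assms by (simp only: mob_fun.simps mmul.simps e e2) simp
qed

lemma mob_smul: "k \<noteq> 0 \<Longrightarrow> mob_fun (smul k g) z = mob_fun g z"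
  by (cases g) (simp add: distrib_left[symmetric] mult.assoc)

lemma ext_smul: "k \<noteq> 0 \<Longrightarrow> poincare_ext (smul k g) P = poincare_ext g P"
proof -
  assume k: "k \<noteq> 0"
  obtain a b c d where g: "g = (a,b,c,d)" by (cases g)
  obtain x t where P: "P = (x,t)" by (cases P)
  have 1: "k*c*x + k*d = k*(c*x+d)" by (simp add: algebra_simps)
  have 2: "k*a*x + k*b = k*(a*x+b)" by (simp add: algebra_simps)
  have 3: "k*a*(k*d) - k*b*(k*c) = k^2*(a*d-b*c)" by (simp add: algebra_simps power2_eq_square)
  have N: "(cmod (k*(c*x+d)))\<^sup>2 + (cmod (k*c))\<^sup>2 * t\<^sup>2 = (cmod k)\<^sup>2 * ((cmod (c*x+d))\<^sup>2 + (cmod c)\<^sup>2 * t\<^sup>2)"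
    by (simp only: norm_mult power_mult_distrib) (simp add: algebra_simps)
  have cm: "complex_of_real ((cmod k)\<^sup>2) = k * cnj k" by (simp only: complex_norm_square)
  have num: "(k*(a*x+b))*cnj(k*(c*x+d)) + k*a*cnj(k*c)*complex_of_real (t\<^sup>2) = complex_of_real ((cmod k)\<^sup>2) * ((a*x+b)*cnj(c*x+d) + a*cnj c * complex_of_real (t\<^sup>2))"
    unfolding cm by (simp add: algebra_simps)
  have kz: "(cmod k)\<^sup>2 \<noteq> 0" using k by simp
  show ?thesis unfolding g P
    apply (simp only: smul.simps poincare_ext.simps Let_def 1 2 3 N num of_real_mult prod.inject)
    using kz by (simp add: norm_mult norm_power)
qed
lemma Npos:
  assumes "t > 0" "c \<noteq> 0 \<or> d \<noteq> 0"
  shows "(cmod (c*x+d))\<^sup>2 + (cmod c)\<^sup>2 * t\<^sup>2 > 0"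
proof (cases "c = 0")
  case True thus ?thesis using assms by simp
next
  case False
  have "(cmod c)\<^sup>2 * t\<^sup>2 > 0" using False assms by simp
  moreover have "(cmod (c*x+d))\<^sup>2 \<ge> 0" by simp
  ultimately show ?thesis by linarith
qed

lemma ext_mult2:
  assumes "t > 0" "c' \<noteq> 0 \<or> d' \<noteq> 0" "c*a'+d*c' \<noteq> 0 \<or> c*b'+d*d' \<noteq> 0"
  shows "poincare_ext (a,b,c,d) (poincare_ext (a',b',c',d') (x,t))
       = poincare_ext (mmul (a,b,c,d) (a',b',c',d')) (x,t)"
  unfolding mmul.simps
  by (rule ext_mult) (use Npos[OF assms(1,2), of x] Npos[OF assms(1,3), of x] in auto)

definition Cay :: "complex \<Rightarrow> mob" where "Cay w = (\<i>, \<i>*w, -1, w)"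
definition Cayi :: "complex \<Rightarrow> mob" where "Cayi w = (w, -\<i>*w, 1, \<i>)"

fun triw :: "mob \<Rightarrow> complex \<Rightarrow> complex \<Rightarrow> mob" where
  "triw (a,b,c,d) w w' = (2*\<i>*w'*(c*w+d), (a+w'*c)*w - (b+w'*d), 0, 2*\<i>*(w'*d-b))"

lemma mat_eq:
  assumes hyp: "a*w+b = w'*(c*w+d)"
  shows "smul (2*\<i>*w) (mmul (Cay w') (a,b,c,d)) = mmul (triw (a,b,c,d) w w') (Cay w)"
proof -
  have bb: "b = w'*(c*w+d) - a*w" using hyp by (simp add: algebra_simps)
  show ?thesis unfolding Cay_def by (simp add: bb algebra_simps)
qed

lemma conj2d:
  assumes hyp: "a*w+b = w'*(c*w+d)" and w: "w \<noteq> 0" and cz: "c*z+d \<noteq> 0" and zw: "z \<noteq> w"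
  shows "mob_fun (Cay w') (mob_fun (a,b,c,d) z)
       = mob_fun (triw (a,b,c,d) w w') (mob_fun (Cay w) z)"
proof -
  have k: "2*\<i>*w \<noteq> 0" using w by simp
  have "mob_fun (Cay w') (mob_fun (a,b,c,d) z) = mob_fun (mmul (Cay w') (a,b,c,d)) z"
    unfolding Cay_def by (rule mob_comp[OF cz])
  also have "\<dots> = mob_fun (smul (2*\<i>*w) (mmul (Cay w') (a,b,c,d))) z" using mob_smul[OF k] by simp
  also have "\<dots> = mob_fun (mmul (triw (a,b,c,d) w w') (Cay w)) z" unfolding mat_eq[OF hyp] ..
  also have "\<dots> = mob_fun (triw (a,b,c,d) w w') (mob_fun (Cay w) z)"
    unfolding Cay_def triw.simps by (rule mob_comp[symmetric]) (use zw in auto)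
  finally show ?thesis .
qed

lemma conj3d:
  assumes hyp: "a*w+b = w'*(c*w+d)" and w: "w \<noteq> 0" and t: "t > 0"
    and cd: "c \<noteq> 0 \<or> d \<noteq> 0" and wc: "w'*c - a \<noteq> 0" and t22: "w'*d - b \<noteq> 0"
  shows "poincare_ext (Cay w') (poincare_ext (a,b,c,d) (x,t))
       = poincare_ext (triw (a,b,c,d) w w') (poincare_ext (Cay w) (x,t))"
proof -
  have k: "2*\<i>*w \<noteq> 0" using w by simp
  have "poincare_ext (Cay w') (poincare_ext (a,b,c,d) (x,t)) = poincare_ext (mmul (Cay w') (a,b,c,d)) (x,t)"
    unfolding Cay_def by (rule ext_mult2[OF t cd]) (use wc in \<open>auto simp: algebra_simps\<close>)
  also have "\<dots> = poincare_ext (smul (2*\<i>*w) (mmul (Cay w') (a,b,c,d))) (x,t)" using ext_smul[OF k] by simp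
  also have "\<dots> = poincare_ext (mmul (triw (a,b,c,d) w w') (Cay w)) (x,t)" unfolding mat_eq[OF hyp] ..
  also have "\<dots> = poincare_ext (triw (a,b,c,d) w w') (poincare_ext (Cay w) (x,t))"
    unfolding Cay_def triw.simps by (rule ext_mult2[symmetric, OF t]) (use t22 in auto)
  finally show ?thesis .
qed

lemma tri_ext:
  assumes "D \<noteq> 0"
  shows "poincare_ext (A,B,0,D) (u,s) = ((A*u+B)/D, cmod (A/D) * s)"
proof -
  have "complex_of_real ((cmod D)\<^sup>2) = D * cnj D" by (simp only: complex_norm_square)
  thus ?thesis using assms by (simp add: Let_def norm_mult norm_divide power2_eq_square field_simps)
qed

lemma tri_mob: "mob_fun (A,B,0,D) u = (A*u+B)/D" by simp


lemma cmod_sq_c: "complex_of_real ((cmod z)\<^sup>2) = z * cnj z" by (simp only: complex_norm_square)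

lemma div_cnj: "Y \<noteq> 0 \<Longrightarrow> X / Y = X * cnj Y / (Y * cnj Y)"
  by (simp add: divide_simps)

lemma cay_im:
  assumes "cmod w = 1"
  shows "Im (mob_fun (Cay w) z) = (1 - (cmod z)\<^sup>2) / (cmod (w - z))\<^sup>2"
proof (cases "z = w")
  case True thus ?thesis using assms by (simp add: Cay_def)
next
  case False
  have ww: "w * cnj w = 1" using assms cmod_sq_c[of w] by simp
  have nz: "(cmod (w - z))\<^sup>2 \<noteq> 0" using False by simp
  have "mob_fun (Cay w) z = \<i>*(z+w)/(w-z)" unfolding Cay_def by (simp add: algebra_simps)
  also have "\<dots> = \<i>*(z+w)*cnj(w-z) / complex_of_real ((cmod (w - z))\<^sup>2)"
    unfolding cmod_sq_c by (rule div_cnj) (use False in auto)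
  also have "\<i>*(z+w)*cnj(w-z) = \<i>*complex_of_real(1 - (cmod z)\<^sup>2) - complex_of_real (2 * Im (z*cnj w))"
  proof -
    have w2: "(Re w)\<^sup>2 + (Im w)\<^sup>2 = 1" using assms by (simp add: cmod_def)
    have z2: "cmod z * cmod z = Re z * Re z + Im z * Im z" using cmod_power2[of z] by (simp add: power2_eq_square)
    show ?thesis using w2 z2 unfolding power2_eq_square
      by (simp add: complex_eq_iff algebra_simps)
  qed
  finally show ?thesis by (simp add: Im_divide_of_real)
qed

lemma cay_ext01:
  assumes "cmod w = 1"
  shows "poincare_ext (Cay w) (0,1) = (0,1)"
proof -
  have ww: "w * cnj w = 1" using assms cmod_sq_c[of w] by simp
  have n: "(cmod w)\<^sup>2 + (cmod (-1::complex))\<^sup>2 * 1\<^sup>2 = 2" using assms by simp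
  have d: "cmod (\<i> * w - \<i> * w * - 1) = 2" using assms by (simp add: norm_mult)
  show ?thesis unfolding Cay_def poincare_ext.simps Let_def using ww
    by (simp add: assms d algebra_simps norm_mult)
qed


lemma cayi_cay:
  assumes "w \<noteq> 0" "z \<noteq> w"
  shows "mob_fun (Cayi w) (mob_fun (Cay w) z) = z"
proof -
  have "mob_fun (Cayi w) (mob_fun (Cay w) z) = mob_fun (mmul (Cayi w) (Cay w)) z"
    unfolding Cayi_def Cay_def by (rule mob_comp) (use assms in auto)
  also have "mmul (Cayi w) (Cay w) = (2*\<i>*w, 0, 0, 2*\<i>*w)" unfolding Cayi_def Cay_def by simp
  finally show ?thesis using assms by simp
qed

lemma cay_cayi:
  assumes "w \<noteq> 0" "u \<noteq> -\<i>"
  shows "mob_fun (Cay w) (mob_fun (Cayi w) u) = u"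
proof -
  have "mob_fun (Cay w) (mob_fun (Cayi w) u) = mob_fun (mmul (Cay w) (Cayi w)) u"
    unfolding Cayi_def Cay_def by (rule mob_comp) (use assms in \<open>simp add: eq_neg_iff_add_eq_0[symmetric]\<close>)
  also have "mmul (Cay w) (Cayi w) = (2*\<i>*w, 0, 0, 2*\<i>*w)" unfolding Cayi_def Cay_def by (simp add: algebra_simps)
  finally show ?thesis using assms by simp
qed

lemma ext_cayi_cay:
  assumes "w \<noteq> 0" "t > 0"
  shows "poincare_ext (Cayi w) (poincare_ext (Cay w) (x,t)) = (x,t)"
proof -
  have "poincare_ext (Cayi w) (poincare_ext (Cay w) (x,t)) = poincare_ext (mmul (Cayi w) (Cay w)) (x,t)"
    unfolding Cayi_def Cay_def by (rule ext_mult2) (use assms in auto)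
  also have "mmul (Cayi w) (Cay w) = (2*\<i>*w, 0, 0, 2*\<i>*w)" unfolding Cayi_def Cay_def by simp
  also have "poincare_ext (2*\<i>*w, 0, 0, 2*\<i>*w) (x,t) = (x,t)" using assms by (subst tri_ext) auto
  finally show ?thesis .
qed

lemma cayi_norm:
  assumes "cmod w = 1"
  shows "cmod (mob_fun (Cayi w) u) = cmod (u - \<i>) / cmod (u + \<i>)"
proof -
  have "mob_fun (Cayi w) u = w * (u - \<i>) / (u + \<i>)" unfolding Cayi_def by (simp add: algebra_simps)
  thus ?thesis using assms by (simp add: norm_mult norm_divide)
qed

lemma im_cmp:
  "(cmod (u - \<i>))\<^sup>2 = (cmod (u + \<i>))\<^sup>2 - 4 * Im u"
  by (simp only: cmod_power2) (simp add: power2_eq_square algebra_simps)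

lemma cayi_lt1:
  assumes "cmod w = 1" "Im u > 0"
  shows "cmod (mob_fun (Cayi w) u) < 1"
proof -
  have "(cmod (u - \<i>))\<^sup>2 < (cmod (u + \<i>))\<^sup>2" using im_cmp[of u] assms by simp
  hence "cmod (u - \<i>) < cmod (u + \<i>)" by (simp add: power_less_imp_less_base)
  moreover have "u + \<i> \<noteq> 0" using assms(2) by (auto simp: add_eq_0_iff complex_eq_iff)
  ultimately show ?thesis unfolding cayi_norm[OF assms(1)] by simp
qed

lemma cayi_le1:
  assumes "cmod w = 1" "Im u \<ge> 0"
  shows "cmod (mob_fun (Cayi w) u) \<le> 1"
proof -
  have "(cmod (u - \<i>))\<^sup>2 \<le> (cmod (u + \<i>))\<^sup>2" using im_cmp[of u] assms by simp
  hence "cmod (u - \<i>) \<le> cmod (u + \<i>)" by (rule power2_le_imp_le) simp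
  moreover have "u + \<i> \<noteq> 0" using assms(2) by (auto simp: add_eq_0_iff complex_eq_iff)
  ultimately show ?thesis unfolding cayi_norm[OF assms(1)] by simp
qed

lemma cayi_ne:
  assumes "w \<noteq> 0"
  shows "mob_fun (Cayi w) u \<noteq> w"
proof
  assume h: "mob_fun (Cayi w) u = w"
  show False
  proof (cases "u + \<i> = 0")
    case True thus False using h assms unfolding Cayi_def by simp
  next
    case False
    hence "w*u - \<i>*w = w*(u + \<i>)" using h unfolding Cayi_def by (simp add: field_simps)
    hence "w * (2*\<i>) = 0" by (simp add: algebra_simps)
    thus False using assms by simp
  qed
qed

lemma aff_H:
  fixes \<alpha> \<beta> :: complex
  assumes H: "\<forall>u. Im u > 0 \<longrightarrow> Im (\<alpha>*u+\<beta>) > 0"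
  shows "Im \<alpha> = 0 \<and> Re \<alpha> \<ge> 0 \<and> Im \<beta> \<ge> 0"
proof -
  have im: "Im (\<alpha>*u+\<beta>) = Re \<alpha> * Im u + Im \<alpha> * Re u + Im \<beta>" for u by simp
  have a: "Im \<alpha> = 0"
  proof (rule ccontr)
    assume n: "Im \<alpha> \<noteq> 0"
    define s where "s = -(Re \<alpha> + Im \<beta> + 1)/Im \<alpha>"
    have "Im \<alpha> * s = -(Re \<alpha> + Im \<beta> + 1)" using n unfolding s_def by simp
    hence "Im (\<alpha> * Complex s 1 + \<beta>) = -1" unfolding im by simp
    thus False using H[rule_format, of "Complex s 1"] by simp
  qed
  have b: "Im \<beta> \<ge> 0"
  proof (rule ccontr)
    assume n: "\<not> Im \<beta> \<ge> 0"
    define y where "y = -Im \<beta> / (2*(\<bar>Re \<alpha>\<bar>+1))"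
    have y0: "y > 0" using n unfolding y_def by (intro divide_pos_pos) auto
    have "\<bar>Re \<alpha>\<bar> * y \<le> (\<bar>Re \<alpha>\<bar>+1) * y" using y0 by simp
    also have "\<dots> = -Im \<beta>/2" unfolding y_def by (simp add: field_simps add_pos_nonneg)
    finally have h1: "\<bar>Re \<alpha>\<bar> * y \<le> -Im \<beta>/2" .
    have "Re \<alpha> * y \<le> \<bar>Re \<alpha>\<bar> * y" using y0 by (intro mult_right_mono) auto
    hence "Re \<alpha> * y + Im \<beta> < 0" using h1 n by linarith
    hence "Im (\<alpha> * Complex 0 y + \<beta>) < 0" unfolding im using a by simp
    thus False using H[rule_format, of "Complex 0 y"] y0 by simp
  qed
  have c: "Re \<alpha> \<ge> 0"
  proof (rule ccontr)
    assume n: "\<not> Re \<alpha> \<ge> 0"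
    define y where "y = (\<bar>Im \<beta>\<bar> + 1) / (- Re \<alpha>)"
    have y0: "y > 0" using n unfolding y_def by (intro divide_pos_pos) auto
    have "Re \<alpha> * y = -(\<bar>Im \<beta>\<bar> + 1)" using n unfolding y_def by simp
    hence "Im (\<alpha> * Complex 0 y + \<beta>) < 0" unfolding im using a by simp
    thus False using H[rule_format, of "Complex 0 y"] y0 by simp
  qed
  show ?thesis using a b c by blast
qed

lemma mob_deriv:
  assumes "c*w+d \<noteq> 0"
  shows "deriv (mob_fun (a,b,c,d)) w = (a*d-b*c)/(c*w+d)\<^sup>2"
proof -
  have e: "mob_fun (a,b,c,d) = (\<lambda>z. (a*z+b)/(c*z+d))" by (rule ext) simp
  have "((\<lambda>z. (a*z+b)/(c*z+d)) has_field_derivative ((a*(c*w+d) - (a*w+b)*c)/(c*w+d)^2)) (at w)"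
    using assms by (auto intro!: derivative_eq_intros simp: power2_eq_square)
  hence "deriv (\<lambda>z. (a*z+b)/(c*z+d)) w = (a*(c*w+d) - (a*w+b)*c)/(c*w+d)^2" by (rule DERIV_imp_deriv)
  thus ?thesis unfolding e by (simp add: algebra_simps)
qed


lemma inj_mob:
  assumes "a*d-b*c \<noteq> 0" "c*z+d \<noteq> 0" "c*w+d \<noteq> 0" "mob_fun (a,b,c,d) z = mob_fun (a,b,c,d) w"
  shows "z = w"
proof -
  have "(a*z+b)*(c*w+d) = (a*w+b)*(c*z+d)" using assms(2-4) by (simp add: field_simps)
  hence "(a*d-b*c)*(z-w) = 0" by (simp add: algebra_simps)
  thus ?thesis using assms(1) by simp
qed

lemma iX: "X \<noteq> 0 \<Longrightarrow> \<i>*X/(-X) = -(\<i>::complex)" by simp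

lemma conj_main:
  fixes a b c d w :: complex
  assumes md: "in_MD (a,b,c,d)" and w1: "cmod w = 1" and w'1: "cmod (mob_fun (a,b,c,d) w) = 1"
  defines "w' \<equiv> mob_fun (a,b,c,d) w"
  defines "\<alpha> \<equiv> (2*\<i>*w'*(c*w+d)) / (2*\<i>*(w'*d-b))"
  defines "\<beta> \<equiv> ((a+w'*c)*w - (b+w'*d)) / (2*\<i>*(w'*d-b))"
  shows "Im \<alpha> = 0 \<and> Re \<alpha> > 0 \<and> Im \<beta> > 0
     \<and> (\<forall>z. cmod z \<le> 1 \<longrightarrow> z \<noteq> w \<longrightarrow> mob_fun (a,b,c,d) z \<noteq> w' \<and> cmod (mob_fun (a,b,c,d) z) \<le> 1
            \<and> mob_fun (Cay w') (mob_fun (a,b,c,d) z) = \<alpha> * mob_fun (Cay w) z + \<beta>)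
     \<and> (\<forall>x t. t > 0 \<longrightarrow> snd (poincare_ext (a,b,c,d) (x,t)) > 0 \<and>
            poincare_ext (Cay w') (poincare_ext (a,b,c,d) (x,t))
              = (\<alpha> * fst (poincare_ext (Cay w) (x,t)) + \<beta>, Re \<alpha> * snd (poincare_ext (Cay w) (x,t))))
     \<and> Re \<alpha> = 1 / cmod (deriv (mob_fun (a,b,c,d)) w)"
proof -
  let ?g = "mob_fun (a,b,c,d)"
  have det: "a*d-b*c \<noteq> 0" using md by simp
  have ball: "\<And>z. cmod z < 1 \<Longrightarrow> c*z+d \<noteq> 0 \<and> cmod (?g z) < 1" using md by simp
  have notD: "?g ` ball 0 1 \<noteq> ball 0 1" using md by simp
  have w0: "w \<noteq> 0" using w1 by auto
  have w'1': "cmod w' = 1" using w'1 w'_def by simp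
  have w'0: "w' \<noteq> 0" using w'1' by (metis norm_zero zero_neq_one)
  have cw: "c*w+d \<noteq> 0"
  proof
    assume "c*w+d = 0" hence "?g w = 0" by simp
    thus False using w'1 by (metis norm_zero zero_neq_one)
  qed
  have hyp: "a*w+b = w'*(c*w+d)" unfolding w'_def using cw by simp
  have e1: "(w'*d - b)*(c*w+d) = w*(a*d-b*c)"
  proof -
    have "(w'*d - b)*(c*w+d) = d*(w'*(c*w+d)) - b*(c*w+d)" by (simp add: algebra_simps)
    also have "\<dots> = d*(a*w+b) - b*(c*w+d)" using hyp by simp
    also have "\<dots> = w*(a*d-b*c)" by (simp add: algebra_simps)
    finally show ?thesis .
  qed
  have t22: "w'*d - b \<noteq> 0" using e1 w0 det by auto
  have e2: "(w'*c - a)*(c*w+d) = b*c - a*d"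
  proof -
    have "(w'*c - a)*(c*w+d) = c*(w'*(c*w+d)) - a*(c*w+d)" by (simp add: algebra_simps)
    also have "\<dots> = c*(a*w+b) - a*(c*w+d)" using hyp by simp
    also have "\<dots> = b*c - a*d" by (simp add: algebra_simps)
    finally show ?thesis .
  qed
  have wc: "w'*c - a \<noteq> 0" using e2 det by auto
  have triform: "\<And>u. mob_fun (triw (a,b,c,d) w w') u = \<alpha> * u + \<beta>"
    unfolding \<alpha>_def \<beta>_def
    by (simp only: triw.simps mob_fun.simps mult_zero_left add_0_left add_divide_distrib times_divide_eq_left)
  have F1: "\<And>z. c*z+d \<noteq> 0 \<Longrightarrow> z \<noteq> w \<Longrightarrow> mob_fun (Cay w') (?g z) = \<alpha> * mob_fun (Cay w) z + \<beta>"
    using conj2d[OF hyp w0] triform by simp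
  have inj: "\<And>z. c*z+d \<noteq> 0 \<Longrightarrow> ?g z = w' \<Longrightarrow> z = w"
    using inj_mob[OF det _ cw] unfolding w'_def by blast
  have imC: "\<And>y. Im (mob_fun (Cay w') y) = (1 - (cmod y)\<^sup>2) / (cmod (w' - y))\<^sup>2"
    using cay_im[OF w'1'] by simp
  have imCw: "\<And>y. Im (mob_fun (Cay w) y) = (1 - (cmod y)\<^sup>2) / (cmod (w - y))\<^sup>2"
    using cay_im[OF w1] by simp
  have F3: "\<forall>u. Im u > 0 \<longrightarrow> Im (\<alpha>*u+\<beta>) > 0"
  proof (intro allI impI)
    fix u :: complex assume u: "Im u > 0"
    define z where "z = mob_fun (Cayi w) u"
    have z1: "cmod z < 1" unfolding z_def by (rule cayi_lt1[OF w1 u])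
    have zw: "z \<noteq> w" unfolding z_def by (rule cayi_ne[OF w0])
    have ui: "u \<noteq> -\<i>" using u by auto
    have Cz: "mob_fun (Cay w) z = u" unfolding z_def by (rule cay_cayi[OF w0 ui])
    have gz: "c*z+d \<noteq> 0" "cmod (?g z) < 1" using ball[OF z1] by auto
    have "mob_fun (Cay w') (?g z) = \<alpha> * u + \<beta>" using F1[OF gz(1) zw] Cz by simp
    moreover have "Im (mob_fun (Cay w') (?g z)) > 0"
    proof -
      have "?g z \<noteq> w'" using gz(2) w'1' by auto
      hence "(cmod (w' - ?g z))\<^sup>2 > 0" by simp
      moreover have "1 - (cmod (?g z))\<^sup>2 > 0" using gz(2) by (simp add: abs_square_less_1)
      ultimately show ?thesis unfolding imC by simp
    qed
    ultimately show "Im (\<alpha>*u+\<beta>) > 0" by simp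
  qed
  have F4: "Im \<alpha> = 0" "Re \<alpha> \<ge> 0" "Im \<beta> \<ge> 0" using aff_H[OF F3] by auto
  have anz: "\<alpha> \<noteq> 0" unfolding \<alpha>_def using w'0 cw t22 by simp
  have areal: "\<alpha> = complex_of_real (Re \<alpha>)" using F4(1) by (simp add: complex_eq_iff)
  have apos: "Re \<alpha> > 0" using F4(2) anz areal by (metis less_eq_real_def of_real_0)
  have imaff: "\<And>u. Im (\<alpha>*u+\<beta>) = Re \<alpha> * Im u + Im \<beta>" using F4(1) by simp
  have F5: "Im \<beta> > 0"
  proof (rule ccontr)
    assume "\<not> Im \<beta> > 0"
    hence b0: "Im \<beta> = 0" using F4(3) by simp
    have "ball 0 1 \<subseteq> ?g ` ball 0 1"
    proof
      fix y :: complex assume "y \<in> ball 0 1"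
      hence y1: "cmod y < 1" by simp
      define u' where "u' = mob_fun (Cay w') y"
      have yw: "y \<noteq> w'" using y1 w'1' by auto
      have "Im u' > 0"
      proof -
        have "(cmod (w' - y))\<^sup>2 > 0" using yw by simp
        moreover have "1 - (cmod y)\<^sup>2 > 0" using y1 by (simp add: abs_square_less_1)
        ultimately show ?thesis unfolding u'_def imC by simp
      qed
      define u where "u = (u' - \<beta>) / \<alpha>"
      have uu: "\<alpha> * u + \<beta> = u'" unfolding u_def using anz by simp
      have "Im u' = Re \<alpha> * Im u" using imaff[of u] uu b0 by simp
      hence u0: "Im u > 0" using \<open>Im u' > 0\<close> apos by (simp add: zero_less_mult_iff)
      define z where "z = mob_fun (Cayi w) u"
      have z1: "cmod z < 1" unfolding z_def by (rule cayi_lt1[OF w1 u0])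
      have zw: "z \<noteq> w" unfolding z_def by (rule cayi_ne[OF w0])
      have ui: "u \<noteq> -\<i>" using u0 by auto
      have Cz: "mob_fun (Cay w) z = u" unfolding z_def by (rule cay_cayi[OF w0 ui])
      have gz: "c*z+d \<noteq> 0" "cmod (?g z) < 1" using ball[OF z1] by auto
      have "mob_fun (Cay w') (?g z) = u'" using F1[OF gz(1) zw] Cz uu by simp
      hence "mob_fun (Cayi w') (mob_fun (Cay w') (?g z)) = mob_fun (Cayi w') (mob_fun (Cay w') y)"
        unfolding u'_def by simp
      moreover have "?g z \<noteq> w'" using gz(2) w'1' by auto
      ultimately have "?g z = y" using cayi_cay[OF w'0] yw by metis
      thus "y \<in> ?g ` ball 0 1" using z1 by force
    qed
    moreover have "?g ` ball 0 1 \<subseteq> ball 0 1" using ball by auto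
    ultimately show False using notD by blast
  qed
  have pole: "\<And>z. cmod z \<le> 1 \<Longrightarrow> c*z+d \<noteq> 0"
  proof
    fix z :: complex assume z1: "cmod z \<le> 1" and cz: "c*z+d = 0"
    have z1': "cmod z = 1" using z1 ball[of z] cz by force
    have zw: "z \<noteq> w" using cz cw by auto
    have azb: "a*z+b \<noteq> 0"
    proof
      assume "a*z+b = 0"
      hence "b = -a*z" "d = -c*z" using cz by (simp_all add: algebra_simps eq_neg_iff_add_eq_0)
      hence "a*d-b*c = 0" by simp
      thus False using det by simp
    qed
    have k: "2*\<i>*w \<noteq> 0" using w0 by simp
    have "mob_fun (mmul (Cay w') (a,b,c,d)) z = -\<i>"
    proof -
      have dd: "d = -c*z" using cz by (simp add: algebra_simps eq_neg_iff_add_eq_0)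
      have "mob_fun (mmul (Cay w') (a,b,c,d)) z = (\<i>*(a*z+b)) / (-(a*z+b))"
        unfolding Cay_def by (simp add: dd algebra_simps)
      also have "\<dots> = -\<i>" by (rule iX[OF azb])
      finally show ?thesis .
    qed
    moreover have "mob_fun (mmul (Cay w') (a,b,c,d)) z = \<alpha> * mob_fun (Cay w) z + \<beta>"
    proof -
      have "mob_fun (mmul (Cay w') (a,b,c,d)) z = mob_fun (smul (2*\<i>*w) (mmul (Cay w') (a,b,c,d))) z"
        using mob_smul[OF k] by simp
      also have "\<dots> = mob_fun (mmul (triw (a,b,c,d) w w') (Cay w)) z" unfolding mat_eq[OF hyp] ..
      also have "\<dots> = mob_fun (triw (a,b,c,d) w w') (mob_fun (Cay w) z)"
        unfolding Cay_def triw.simps by (rule mob_comp[symmetric]) (use zw in auto)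
      finally show ?thesis using triform by simp
    qed
    ultimately have "Im (\<alpha> * mob_fun (Cay w) z + \<beta>) = -1" by simp
    moreover have "Im (mob_fun (Cay w) z) = 0" unfolding imCw using z1' by simp
    ultimately show False using imaff[of "mob_fun (Cay w) z"] F5 by simp
  qed
  have F6: "\<forall>z. cmod z \<le> 1 \<longrightarrow> z \<noteq> w \<longrightarrow> ?g z \<noteq> w' \<and> cmod (?g z) \<le> 1
            \<and> mob_fun (Cay w') (?g z) = \<alpha> * mob_fun (Cay w) z + \<beta>"
  proof (intro allI impI)
    fix z :: complex assume z1: "cmod z \<le> 1" and zw: "z \<noteq> w"
    have cz: "c*z+d \<noteq> 0" using pole[OF z1] .
    have ne: "?g z \<noteq> w'" using inj[OF cz] zw by blast
    have eq: "mob_fun (Cay w') (?g z) = \<alpha> * mob_fun (Cay w) z + \<beta>" using F1[OF cz zw] .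
    have "Im (mob_fun (Cay w) z) \<ge> 0" unfolding imCw using z1
      by (intro divide_nonneg_nonneg) (auto simp: abs_square_le_1)
    hence "Im (mob_fun (Cay w') (?g z)) \<ge> 0" unfolding eq imaff using apos F4(3) by simp
    hence "(1 - (cmod (?g z))\<^sup>2) / (cmod (w' - ?g z))\<^sup>2 \<ge> 0" unfolding imC .
    moreover have "(cmod (w' - ?g z))\<^sup>2 > 0" using ne by simp
    ultimately have "1 - (cmod (?g z))\<^sup>2 \<ge> 0" by (simp add: zero_le_divide_iff)
    hence "cmod (?g z) \<le> 1" by (simp add: abs_square_le_1)
    thus "?g z \<noteq> w' \<and> cmod (?g z) \<le> 1 \<and> mob_fun (Cay w') (?g z) = \<alpha> * mob_fun (Cay w) z + \<beta>"
      using ne eq by simp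
  qed
  have cd: "c \<noteq> 0 \<or> d \<noteq> 0" using det by auto
  have F7: "\<forall>x t. t > 0 \<longrightarrow> snd (poincare_ext (a,b,c,d) (x,t)) > 0 \<and>
            poincare_ext (Cay w') (poincare_ext (a,b,c,d) (x,t))
              = (\<alpha> * fst (poincare_ext (Cay w) (x,t)) + \<beta>, Re \<alpha> * snd (poincare_ext (Cay w) (x,t)))"
  proof (intro allI impI conjI)
    fix x :: complex and t :: real assume t: "t > 0"
    have N: "(cmod (c*x+d))\<^sup>2 + (cmod c)\<^sup>2 * t\<^sup>2 > 0" by (rule Npos[OF t cd])
    show "snd (poincare_ext (a,b,c,d) (x,t)) > 0"
      using N t det by (simp add: Let_def)
    obtain u s where us: "poincare_ext (Cay w) (x,t) = (u,s)" by (cases "poincare_ext (Cay w) (x,t)")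
    have cma: "cmod \<alpha> = Re \<alpha>" using areal apos by (metis abs_of_pos norm_of_real)
    have "poincare_ext (Cay w') (poincare_ext (a,b,c,d) (x,t)) = poincare_ext (triw (a,b,c,d) w w') (u,s)"
      using conj3d[OF hyp w0 t cd wc t22] us by simp
    also have "\<dots> = (\<alpha> * u + \<beta>, Re \<alpha> * s)"
    proof -
      have "poincare_ext (triw (a,b,c,d) w w') (u,s) = ((2*\<i>*w'*(c*w+d)*u + ((a+w'*c)*w - (b+w'*d)))/(2*\<i>*(w'*d-b)), cmod (2*\<i>*w'*(c*w+d)/(2*\<i>*(w'*d-b))) * s)"
        unfolding triw.simps by (rule tri_ext) (use t22 in simp)
      also have "\<dots> = (\<alpha> * u + \<beta>, cmod \<alpha> * s)" unfolding \<alpha>_def \<beta>_def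
        by (simp only: add_divide_distrib times_divide_eq_left)
      finally show ?thesis unfolding cma .
    qed
    finally show "poincare_ext (Cay w') (poincare_ext (a,b,c,d) (x,t))
              = (\<alpha> * fst (poincare_ext (Cay w) (x,t)) + \<beta>, Re \<alpha> * snd (poincare_ext (Cay w) (x,t)))"
      using us by simp
  qed
  have F8: "Re \<alpha> = 1 / cmod (deriv (mob_fun (a,b,c,d)) w)"
  proof -
    have cma: "cmod \<alpha> = Re \<alpha>" using areal apos by (metis abs_of_pos norm_of_real)
    have n1: "cmod (w'*d-b) * cmod (c*w+d) = cmod (a*d-b*c)" using arg_cong[OF e1, of cmod] w1
      by (simp add: norm_mult)
    have "cmod \<alpha> = cmod (c*w+d) / cmod (w'*d-b)" unfolding \<alpha>_def using w'1'
      by (simp add: norm_mult norm_divide)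
    also have "\<dots> = (cmod (c*w+d))\<^sup>2 / cmod (a*d-b*c)" unfolding n1[symmetric] using cw
      by (simp add: power2_eq_square)
    also have "\<dots> = 1 / cmod (deriv (mob_fun (a,b,c,d)) w)"
      unfolding mob_deriv[OF cw] by (simp add: norm_divide norm_power)
    finally show ?thesis unfolding cma .
  qed
  show ?thesis using F4(1) apos F5 F6 F7 F8 by blast
qed


fun alpha :: "mob \<Rightarrow> complex \<Rightarrow> complex" where
  "alpha (a,b,c,d) w = (2*\<i>*mob_fun (a,b,c,d) w*(c*w+d)) / (2*\<i>*(mob_fun (a,b,c,d) w*d-b))"
fun beta :: "mob \<Rightarrow> complex \<Rightarrow> complex" where
  "beta (a,b,c,d) w = ((a+mob_fun (a,b,c,d) w*c)*w - (b+mob_fun (a,b,c,d) w*d)) / (2*\<i>*(mob_fun (a,b,c,d) w*d-b))"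

lemma conj_g:
  assumes md: "in_MD g" and w1: "cmod w = 1" and w'1: "cmod (mob_fun g w) = 1"
  shows "Im (alpha g w) = 0 \<and> Re (alpha g w) > 0 \<and> Im (beta g w) > 0
     \<and> (\<forall>z. cmod z \<le> 1 \<longrightarrow> z \<noteq> w \<longrightarrow> mob_fun g z \<noteq> mob_fun g w \<and> cmod (mob_fun g z) \<le> 1
            \<and> mob_fun (Cay (mob_fun g w)) (mob_fun g z) = alpha g w * mob_fun (Cay w) z + beta g w)
     \<and> (\<forall>x t. t > 0 \<longrightarrow> snd (poincare_ext g (x,t)) > 0 \<and>
            poincare_ext (Cay (mob_fun g w)) (poincare_ext g (x,t))
              = (alpha g w * fst (poincare_ext (Cay w) (x,t)) + beta g w, Re (alpha g w) * snd (poincare_ext (Cay w) (x,t))))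
     \<and> Re (alpha g w) = 1 / cmod (deriv (mob_fun g) w)"
proof -
  obtain a b c d where g: "g = (a,b,c,d)" by (cases g)
  show ?thesis using conj_main[of a b c d w] md w1 w'1 unfolding g alpha.simps beta.simps by blast
qed

lemma uniq_w:
  assumes md: "in_MD g" and "cmod w1 = 1" "cmod (mob_fun g w1) = 1" "cmod w2 = 1" "cmod (mob_fun g w2) = 1"
  shows "w1 = w2"
proof (rule ccontr)
  assume ne: "w1 \<noteq> w2"
  note C = conj_g[OF md assms(2,3)]
  have w1': "cmod (mob_fun g w1) = 1" by fact
  have "mob_fun (Cay (mob_fun g w1)) (mob_fun g w2) = alpha g w1 * mob_fun (Cay w1) w2 + beta g w1"
    using C ne assms(4) by auto
  hence "Im (mob_fun (Cay (mob_fun g w1)) (mob_fun g w2)) = Re (alpha g w1) * Im (mob_fun (Cay w1) w2) + Im (beta g w1)"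
    using C by simp
  moreover have "Im (mob_fun (Cay (mob_fun g w1)) (mob_fun g w2)) = 0" using cay_im[OF w1'] assms(5) by simp
  moreover have "Im (mob_fun (Cay w1) w2) = 0" using cay_im[OF assms(2)] assms(4) by simp
  ultimately show False using C by simp
qed

lemma horo_id:
  assumes "cmod \<zeta> = 1"
  shows "\<rho>\<^sup>2 - (cmod (y - complex_of_real (1-\<rho>) * \<zeta>))\<^sup>2 = \<rho> * (1 - (cmod y)\<^sup>2) - (1-\<rho>) * (cmod (\<zeta> - y))\<^sup>2"
proof -
  have z2: "(Re \<zeta>)\<^sup>2 + (Im \<zeta>)\<^sup>2 = 1" using assms by (simp add: cmod_def)
  hence z2': "Re \<zeta> * Re \<zeta> = 1 - Im \<zeta> * Im \<zeta>" by (simp add: power2_eq_square)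
  show ?thesis unfolding cmod_power2 unfolding power2_eq_square by (simp add: z2' algebra_simps)
qed

lemma horo:
  assumes z1: "cmod \<zeta> = 1" and h: "h \<ge> 0"
  shows "{y. cmod y \<le> 1 \<and> (y = \<zeta> \<or> Im (mob_fun (Cay \<zeta>) y) \<ge> h)}
       = cball (complex_of_real (1 - 1/(1+h)) * \<zeta>) (1/(1+h))"
proof -
  define \<rho> where "\<rho> = 1/(1+h)"
  have r0: "\<rho> > 0" "\<rho> \<le> 1" unfolding \<rho>_def using h by auto
  have rh: "\<rho> * h = 1 - \<rho>" unfolding \<rho>_def using h by (simp add: field_simps)
  have key: "\<And>y. y \<noteq> \<zeta> \<Longrightarrow> (Im (mob_fun (Cay \<zeta>) y) \<ge> h \<longleftrightarrow> (1-\<rho>) * (cmod (\<zeta> - y))\<^sup>2 \<le> \<rho> * (1 - (cmod y)\<^sup>2))"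
  proof -
    fix y assume ne: "y \<noteq> \<zeta>"
    have q: "(cmod (\<zeta> - y))\<^sup>2 > 0" using ne by simp
    have "Im (mob_fun (Cay \<zeta>) y) \<ge> h \<longleftrightarrow> h * (cmod (\<zeta> - y))\<^sup>2 \<le> 1 - (cmod y)\<^sup>2"
      unfolding cay_im[OF z1] using q by (simp add: pos_le_divide_eq)
    also have "\<dots> \<longleftrightarrow> \<rho> * (h * (cmod (\<zeta> - y))\<^sup>2) \<le> \<rho> * (1 - (cmod y)\<^sup>2)"
      using r0 by simp
    also have "\<rho> * (h * (cmod (\<zeta> - y))\<^sup>2) = (1-\<rho>) * (cmod (\<zeta> - y))\<^sup>2" using rh by (metis mult.assoc)
    finally show "(Im (mob_fun (Cay \<zeta>) y) \<ge> h \<longleftrightarrow> (1-\<rho>) * (cmod (\<zeta> - y))\<^sup>2 \<le> \<rho> * (1 - (cmod y)\<^sup>2))" .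
  qed
  have inball: "\<And>y. y \<in> cball (complex_of_real (1-\<rho>) * \<zeta>) \<rho> \<longleftrightarrow> (1-\<rho>) * (cmod (\<zeta> - y))\<^sup>2 \<le> \<rho> * (1 - (cmod y)\<^sup>2)"
  proof -
    fix y
    have "y \<in> cball (complex_of_real (1-\<rho>) * \<zeta>) \<rho> \<longleftrightarrow> cmod (y - complex_of_real (1-\<rho>) * \<zeta>) \<le> \<rho>"
      by (simp add: dist_norm norm_minus_commute)
    also have "\<dots> \<longleftrightarrow> (cmod (y - complex_of_real (1-\<rho>) * \<zeta>))\<^sup>2 \<le> \<rho>\<^sup>2"
      using r0 by (simp add: abs_le_square_iff[symmetric] power2_le_iff_abs_le)
    also have "\<dots> \<longleftrightarrow> 0 \<le> \<rho>\<^sup>2 - (cmod (y - complex_of_real (1-\<rho>) * \<zeta>))\<^sup>2" by simp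
    also have "\<dots> \<longleftrightarrow> (1-\<rho>) * (cmod (\<zeta> - y))\<^sup>2 \<le> \<rho> * (1 - (cmod y)\<^sup>2)"
      unfolding horo_id[OF z1] by simp
    finally show "y \<in> cball (complex_of_real (1-\<rho>) * \<zeta>) \<rho> \<longleftrightarrow> (1-\<rho>) * (cmod (\<zeta> - y))\<^sup>2 \<le> \<rho> * (1 - (cmod y)\<^sup>2)" .
  qed
  have sub1: "\<And>y. y \<in> cball (complex_of_real (1-\<rho>) * \<zeta>) \<rho> \<Longrightarrow> cmod y \<le> 1"
  proof -
    fix y assume "y \<in> cball (complex_of_real (1-\<rho>) * \<zeta>) \<rho>"
    hence "cmod (y - complex_of_real (1-\<rho>) * \<zeta>) \<le> \<rho>" by (simp add: dist_norm norm_minus_commute)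
    moreover have "cmod (complex_of_real (1-\<rho>) * \<zeta>) = 1 - \<rho>"
    proof -
      have "cmod (complex_of_real (1-\<rho>)) = 1-\<rho>" using r0 by (simp only: norm_of_real)
      thus ?thesis using z1 by (simp only: norm_mult) simp
    qed
    moreover have "cmod y \<le> cmod (y - complex_of_real (1-\<rho>) * \<zeta>) + cmod (complex_of_real (1-\<rho>) * \<zeta>)"
      using norm_triangle_ineq[of "y - complex_of_real (1-\<rho>) * \<zeta>" "complex_of_real (1-\<rho>) * \<zeta>"] by simp
    ultimately show "cmod y \<le> 1" by linarith
  qed
  have zin: "\<zeta> \<in> cball (complex_of_real (1-\<rho>) * \<zeta>) \<rho>"
  proof -
    have "\<zeta> - complex_of_real (1-\<rho>) * \<zeta> = complex_of_real \<rho> * \<zeta>" by (simp add: algebra_simps)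
    hence "cmod (\<zeta> - complex_of_real (1-\<rho>) * \<zeta>) = \<rho>" using r0 z1 by (simp add: norm_mult)
    thus ?thesis by (simp add: dist_norm norm_minus_commute)
  qed
  show ?thesis unfolding \<rho>_def[symmetric]
  proof (intro set_eqI iffI)
    fix y assume y: "y \<in> {y. cmod y \<le> 1 \<and> (y = \<zeta> \<or> Im (mob_fun (Cay \<zeta>) y) \<ge> h)}"
    show "y \<in> cball (complex_of_real (1-\<rho>) * \<zeta>) \<rho>"
    proof (cases "y = \<zeta>")
      case True thus ?thesis using zin by simp
    next
      case False
      hence "Im (mob_fun (Cay \<zeta>) y) \<ge> h" using y by simp
      thus ?thesis using key[OF False] inball[of y] by simp
    qed
  next
    fix y assume yb: "y \<in> cball (complex_of_real (1-\<rho>) * \<zeta>) \<rho>"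
    show "y \<in> {y. cmod y \<le> 1 \<and> (y = \<zeta> \<or> Im (mob_fun (Cay \<zeta>) y) \<ge> h)}"
      using sub1[OF yb] key inball yb by auto
  qed
qed


lemma cayi_ext_lim:
  assumes u: "u \<longlonglongrightarrow> u0" and s: "s \<longlonglongrightarrow> 0" and im: "Im u0 \<ge> 0" and w: "w \<noteq> 0"
  shows "(\<lambda>n. poincare_ext (Cayi w) (u n, s n)) \<longlonglongrightarrow> (mob_fun (Cayi w) u0, 0)"
proof -
  have ui: "u0 + \<i> \<noteq> 0" using im by (auto simp: complex_eq_iff)
  have "(\<lambda>n. poincare_ext (Cayi w) (u n, s n)) \<longlonglongrightarrow> poincare_ext (Cayi w) (u0, 0)"
    unfolding Cayi_def poincare_ext.simps Let_def
    by (intro tendsto_intros u s) (use ui in auto)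
  also have "poincare_ext (Cayi w) (u0, 0) = (mob_fun (Cayi w) u0, 0)"
  proof -
    have "(w * u0 + - \<i> * w) * cnj (1 * u0 + \<i>) / complex_of_real ((cmod (1 * u0 + \<i>))\<^sup>2)
        = (w * u0 + - \<i> * w) / (1 * u0 + \<i>)"
      unfolding cmod_sq_c by (rule div_cnj[symmetric]) (use ui in simp)
    thus ?thesis unfolding Cayi_def poincare_ext.simps Let_def by simp
  qed
  finally show ?thesis .
qed

lemma chord_lim:
  assumes "P \<longlonglongrightarrow> Q"
  shows "(\<lambda>n. chordal (Some (P n)) (Some R)) \<longlonglongrightarrow> chordal (Some Q) (Some R)"
proof -
  have p: "(\<lambda>n. fst (P n)) \<longlonglongrightarrow> fst Q" "(\<lambda>n. snd (P n)) \<longlonglongrightarrow> snd Q"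
    using assms by (auto intro: tendsto_fst tendsto_snd)
  have pos: "(1 + sqnorm3 p) * (1 + sqnorm3 q) > 0" for p q
    unfolding sqnorm3_def by (intro mult_pos_pos add_pos_nonneg) auto
  show ?thesis unfolding chordal.simps sqnorm3_def
    by (intro tendsto_intros p assms) (use pos[of Q R] in \<open>auto simp: sqnorm3_def\<close>)
qed

fun gam :: "(nat \<Rightarrow> real) \<Rightarrow> nat \<Rightarrow> real" where
  "gam A 0 = 1"
| "gam A (Suc n) = gam A n * A (Suc n)"

fun bsum :: "(nat \<Rightarrow> real) \<Rightarrow> (nat \<Rightarrow> complex) \<Rightarrow> nat \<Rightarrow> complex" where
  "bsum A bt 0 = 0"
| "bsum A bt (Suc n) = bsum A bt n + complex_of_real (gam A n) * bt (Suc n)"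

lemma gam_prod: "gam A n = (\<Prod>k=1..n. A k)"
  by (induction n) (auto simp: atLeastAtMostSuc_conv mult.commute)

lemma bsum_sum: "bsum A bt n = (\<Sum>k<n. complex_of_real (gam A k) * bt (Suc k))"
  by (induction n) auto

theorem lemma3p2:
  fixes f :: "nat \<Rightarrow> mob" and S :: "mob set" and z :: "nat \<Rightarrow> complex"
  assumes "finite S" and "\<forall>g\<in>S. in_MD g"
    and "\<forall>n\<ge>1. f n \<in> S"
    and "\<forall>n. cmod (z n) = 1"
    and "\<forall>n\<ge>1. mob_fun (f n) (z n) = z (n - 1)"
  shows "(limit_disc_type f \<longleftrightarrow>
           summable (\<lambda>n. \<Prod>k=1..Suc n. 1 / cmod (deriv (mob_fun (f k)) (z k))))
         \<and> (\<forall>q. limit_disc_type f \<and> converges_ideally f q \<longrightarrow> q \<noteq> Some (z 0))"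
proof -
  note finS = assms(1) and MD = assms(2) and fS = assms(3) and z1 = assms(4) and fz = assms(5)
  define W where "W = {(g,w). g \<in> S \<and> cmod w = 1 \<and> cmod (mob_fun g w) = 1}"
  have fk: "in_MD (f k) \<and> cmod (z k) = 1 \<and> cmod (mob_fun (f k) (z k)) = 1
      \<and> mob_fun (f k) (z k) = z (k-1) \<and> (f k, z k) \<in> W" if "k \<ge> 1" for k
    using that MD fS z1 fz unfolding W_def by auto
  have finW: "finite W"
  proof -
    have "W \<subseteq> (\<lambda>g. (g, SOME w. cmod w = 1 \<and> cmod (mob_fun g w) = 1)) ` S"
    proof
      fix p assume "p \<in> W"
      then obtain g w where p: "p = (g,w)" and g: "g \<in> S" and w: "cmod w = 1" "cmod (mob_fun g w) = 1"
        unfolding W_def by auto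
      define w0 where "w0 = (SOME w. cmod w = 1 \<and> cmod (mob_fun g w) = 1)"
      have "cmod w0 = 1 \<and> cmod (mob_fun g w0) = 1" unfolding w0_def by (rule someI[of _ w]) (use w in simp)
      hence "w = w0" using uniq_w[of g w w0] MD g w by auto
      thus "p \<in> (\<lambda>g. (g, SOME w. cmod w = 1 \<and> cmod (mob_fun g w) = 1)) ` S" using p g w0_def by auto
    qed
    thus ?thesis using finS finite_subset by blast
  qed
  have Wprop: "Im (alpha g w) = 0 \<and> Re (alpha g w) > 0 \<and> Im (beta g w) > 0" if "(g,w) \<in> W" for g w
    using that conj_g[of g w] MD unfolding W_def by auto
  define A where "A k = Re (alpha (f k) (z k))" for k
  define bt where "bt k = beta (f k) (z k)" for k
  have Wne: "W \<noteq> {}" using fk[of 1] by auto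
  define bmin where "bmin = Min ((\<lambda>(g,w). Im (beta g w)) ` W)"
  define bmax where "bmax = Max ((\<lambda>(g,w). cmod (beta g w)) ` W)"
  have bmin0: "bmin > 0"
  proof -
    have "bmin \<in> (\<lambda>(g,w). Im (beta g w)) ` W" unfolding bmin_def using finW Wne by (intro Min_in) auto
    thus ?thesis using Wprop by auto
  qed
  have bbounds: "bmin \<le> Im (bt k) \<and> Im (bt k) \<le> bmax \<and> cmod (bt k) \<le> bmax" if "k \<ge> 1" for k
  proof -
    have m: "(f k, z k) \<in> W" using fk[OF that] by simp
    have 1: "bmin \<le> Im (bt k)" unfolding bmin_def bt_def using finW m
      by (intro Min_le) (auto intro: rev_image_eqI[of "(f k, z k)"])
    have 2: "cmod (bt k) \<le> bmax" unfolding bmax_def bt_def using finW m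
      by (intro Max_ge) (auto intro: rev_image_eqI[of "(f k, z k)"])
    have "Im (bt k) \<le> cmod (bt k)" by (metis abs_Im_le_cmod abs_ge_self order_trans)
    thus ?thesis using 1 2 by simp
  qed
  have Apos: "A k > 0" and Areal: "alpha (f k) (z k) = complex_of_real (A k)"
    and Aderiv: "A k = 1 / cmod (deriv (mob_fun (f k)) (z k))" if "k \<ge> 1" for k
  proof -
    have F: "in_MD (f k)" "cmod (z k) = 1" "cmod (mob_fun (f k) (z k)) = 1" using fk[OF that] by auto
    note C = conj_g[OF F]
    have c1: "Im (alpha (f k) (z k)) = 0" using C by blast
    have c2: "Re (alpha (f k) (z k)) > 0" using C by blast
    have c3: "Re (alpha (f k) (z k)) = 1 / cmod (deriv (mob_fun (f k)) (z k))" using C by blast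
    show "A k > 0" using c2 unfolding A_def .
    show "alpha (f k) (z k) = complex_of_real (A k)" using c1 unfolding A_def by (simp add: complex_eq_iff)
    show "A k = 1 / cmod (deriv (mob_fun (f k)) (z k))" using c3 unfolding A_def .
  qed
  define G where "G = gam A"
  define B where "B = bsum A bt"
  have Gpos: "G n > 0" for n unfolding G_def
  proof (induction n)
    case (Suc n) thus ?case using Apos[of "Suc n"] by simp
  qed simp
  have P2: "\<forall>y. cmod y \<le> 1 \<longrightarrow> y \<noteq> z n \<longrightarrow> comp_seq f n y \<noteq> z 0 \<and> cmod (comp_seq f n y) \<le> 1
      \<and> mob_fun (Cay (z 0)) (comp_seq f n y) = complex_of_real (G n) * mob_fun (Cay (z n)) y + B n" for n
  proof (induction n)
    case 0 thus ?case unfolding G_def B_def by simp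
  next
    case (Suc n)
    show ?case
    proof (intro allI impI)
      fix y assume y1: "cmod y \<le> 1" and yn: "y \<noteq> z (Suc n)"
      have F: "in_MD (f (Suc n))" "cmod (z (Suc n)) = 1" "cmod (mob_fun (f (Suc n)) (z (Suc n))) = 1"
        using fk[of "Suc n"] by auto
      have im: "mob_fun (f (Suc n)) (z (Suc n)) = z n" using fk[of "Suc n"] by simp
      have C: "\<forall>z'. cmod z' \<le> 1 \<longrightarrow> z' \<noteq> z (Suc n) \<longrightarrow> mob_fun (f (Suc n)) z' \<noteq> z n \<and> cmod (mob_fun (f (Suc n)) z') \<le> 1
            \<and> mob_fun (Cay (z n)) (mob_fun (f (Suc n)) z') = alpha (f (Suc n)) (z (Suc n)) * mob_fun (Cay (z (Suc n))) z' + bt (Suc n)"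
        using conj_g[OF F] unfolding im bt_def by blast
      have c: "mob_fun (f (Suc n)) y \<noteq> z n" "cmod (mob_fun (f (Suc n)) y) \<le> 1"
         "mob_fun (Cay (z n)) (mob_fun (f (Suc n)) y) = complex_of_real (A (Suc n)) * mob_fun (Cay (z (Suc n))) y + bt (Suc n)"
        using C[rule_format, OF y1 yn] Areal[of "Suc n"] by auto
      have IH: "comp_seq f n (mob_fun (f (Suc n)) y) \<noteq> z 0 \<and> cmod (comp_seq f n (mob_fun (f (Suc n)) y)) \<le> 1
         \<and> mob_fun (Cay (z 0)) (comp_seq f n (mob_fun (f (Suc n)) y)) = complex_of_real (G n) * mob_fun (Cay (z n)) (mob_fun (f (Suc n)) y) + B n"
        using Suc.IH c(1,2) by blast
      show "comp_seq f (Suc n) y \<noteq> z 0 \<and> cmod (comp_seq f (Suc n) y) \<le> 1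
         \<and> mob_fun (Cay (z 0)) (comp_seq f (Suc n) y) = complex_of_real (G (Suc n)) * mob_fun (Cay (z (Suc n))) y + B (Suc n)"
        using IH unfolding comp_seq.simps o_apply c(3) G_def B_def
        by (simp add: algebra_simps)
    qed
  qed
  have fix0: "comp_seq f n (z n) = z 0" for n
    by (induction n) (use fk in auto)
  define H where "H n = Im (B n)" for n
  have HSuc: "H (Suc n) = H n + G n * Im (bt (Suc n))" for n unfolding H_def B_def G_def by simp
  have H0: "H 0 = 0" unfolding H_def B_def by simp
  have Hmono: "H n \<le> H (Suc n)" for n
    using HSuc[of n] Gpos[of n] bbounds[of "Suc n"] bmin0 by (simp add: order_less_imp_le)
  have Hmono': "m \<le> n \<Longrightarrow> H m \<le> H n" for m n
    by (induction n) (use Hmono le_Suc_eq order_trans in blast)+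
  have Hbounds: "bmin * (\<Sum>k<n. G k) \<le> H n \<and> H n \<le> bmax * (\<Sum>k<n. G k)" for n
  proof (induction n)
    case 0 thus ?case using H0 by simp
  next
    case (Suc n)
    have "bmin * G n \<le> G n * Im (bt (Suc n))" "G n * Im (bt (Suc n)) \<le> bmax * G n"
      using bbounds[of "Suc n"] Gpos[of n] by (simp_all add: mult.commute mult_left_mono)
    thus ?case using Suc HSuc[of n] by (simp add: algebra_simps)
  qed
  define E where "E h = {y. cmod y \<le> 1 \<and> (y = z 0 \<or> Im (mob_fun (Cay (z 0)) y) \<ge> h)}" for h
  have imC: "Im (mob_fun (Cay w) y) \<ge> 0" if "cmod w = 1" "cmod y \<le> 1" for w y
    unfolding cay_im[OF that(1)] using that(2) by (intro divide_nonneg_nonneg) (auto simp: abs_square_le_1)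
  have img: "comp_seq f n ` cball 0 1 = E (H n)" for n
  proof (intro set_eqI iffI)
    fix y assume "y \<in> comp_seq f n ` cball 0 1"
    then obtain x where x: "cmod x \<le> 1" "y = comp_seq f n x" by auto
    show "y \<in> E (H n)"
    proof (cases "x = z n")
      case True thus ?thesis using x fix0 z1 unfolding E_def by simp
    next
      case False
      note P = P2[of n, rule_format, OF x(1) False]
      have "Im (mob_fun (Cay (z 0)) y) = G n * Im (mob_fun (Cay (z n)) x) + H n"
        using P x(2) unfolding H_def by simp
      moreover have "G n * Im (mob_fun (Cay (z n)) x) \<ge> 0" using Gpos[of n] imC[OF z1[rule_format] x(1)] by simp
      ultimately show ?thesis using P x(2) unfolding E_def by simp
    qed
  next
    fix y assume yE: "y \<in> E (H n)"
    show "y \<in> comp_seq f n ` cball 0 1"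
    proof (cases "y = z 0")
      case True thus ?thesis using fix0[of n] z1 by (metis (no_types, lifting) image_eqI mem_cball_0 order_refl)
    next
      case False
      have y1: "cmod y \<le> 1" and yh: "Im (mob_fun (Cay (z 0)) y) \<ge> H n" using yE False unfolding E_def by auto
      define u' where "u' = mob_fun (Cay (z 0)) y"
      define u where "u = (u' - B n) / complex_of_real (G n)"
      have Gn0: "complex_of_real (G n) \<noteq> 0" using Gpos[of n] by simp
      have uu: "complex_of_real (G n) * u + B n = u'" unfolding u_def using Gn0 by simp
      have "Im u' = G n * Im u + H n" using arg_cong[OF uu, of Im] unfolding H_def by simp
      hence u0: "Im u \<ge> 0" using yh Gpos[of n] unfolding u'_def by (simp add: zero_le_mult_iff)
      have zn1: "cmod (z n) = 1" "z n \<noteq> 0" using z1[rule_format, of n] by auto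
      have z01: "cmod (z 0) = 1" "z 0 \<noteq> 0" using z1[rule_format, of 0] by auto
      define x where "x = mob_fun (Cayi (z n)) u"
      have x1: "cmod x \<le> 1" unfolding x_def by (rule cayi_le1[OF zn1(1) u0])
      have xn: "x \<noteq> z n" unfolding x_def by (rule cayi_ne[OF zn1(2)])
      have ui: "u \<noteq> -\<i>" using u0 by auto
      have Cx: "mob_fun (Cay (z n)) x = u" unfolding x_def by (rule cay_cayi[OF zn1(2) ui])
      note P = P2[of n, rule_format, OF x1 xn]
      have "mob_fun (Cay (z 0)) (comp_seq f n x) = u'" using P Cx uu by simp
      hence "mob_fun (Cayi (z 0)) (mob_fun (Cay (z 0)) (comp_seq f n x)) = mob_fun (Cayi (z 0)) (mob_fun (Cay (z 0)) y)"
        unfolding u'_def by simp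
      hence "comp_seq f n x = y" using cayi_cay[OF z01(2)] P False by metis
      thus ?thesis using x1 by force
    qed
  qed
  have z01: "cmod (z 0) = 1" "z 0 \<noteq> 0" using z1[rule_format, of 0] by auto
  have Hnn: "H n \<ge> 0" for n using Hmono'[of 0 n] H0 by simp
  have inter: "(\<Inter>n\<in>{1..}. comp_seq f n ` cball 0 1) = (\<Inter>n\<in>{1..}. E (H n))"
    using img by simp
  have ldt_iff: "limit_disc_type f \<longleftrightarrow> bdd_above (range H)"
  proof
    assume "limit_disc_type f"
    then obtain c r where r: "r > 0" and eq: "(\<Inter>n\<in>{1..}. E (H n)) = cball c r"
      unfolding limit_disc_type_def inter by blast
    show "bdd_above (range H)"
    proof (rule ccontr)
      assume nb: "\<not> bdd_above (range H)"
      have sing: "y = z 0" if y: "y \<in> (\<Inter>n\<in>{1..}. E (H n))" for y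
      proof (rule ccontr)
        assume yz: "y \<noteq> z 0"
        have "H n \<le> Im (mob_fun (Cay (z 0)) y)" for n
        proof -
          have "y \<in> E (H (Suc n))" using y by auto
          hence "H (Suc n) \<le> Im (mob_fun (Cay (z 0)) y)" using yz unfolding E_def by auto
          thus ?thesis using Hmono[of n] by linarith
        qed
        hence "bdd_above (range H)" by (rule bdd_aboveI2)
        thus False using nb by simp
      qed
      have "c \<in> cball c r" using r by simp
      moreover have "c + complex_of_real r \<in> cball c r" using r by (simp add: dist_norm)
      ultimately have "c = z 0" "c + complex_of_real r = z 0" using sing unfolding eq[symmetric] by blast+
      hence "complex_of_real r = 0" by simp
      thus False using r by simp
    qed
  next
    assume bdd: "bdd_above (range H)"
    define L where "L = (SUP n. H n)"
    have HL: "H n \<le> L" for n unfolding L_def using bdd by (intro cSUP_upper) auto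
    have L0: "L \<ge> 0" using HL[of 0] H0 by simp
    have "(\<Inter>n\<in>{1..}. E (H n)) = E L"
    proof (intro set_eqI iffI)
      fix y assume y: "y \<in> (\<Inter>n\<in>{1..}. E (H n))"
      have y1: "cmod y \<le> 1" using y unfolding E_def by auto
      show "y \<in> E L"
      proof (cases "y = z 0")
        case True thus ?thesis using y1 unfolding E_def by simp
      next
        case False
        have "H n \<le> Im (mob_fun (Cay (z 0)) y)" for n
        proof -
          have "y \<in> E (H (Suc n))" using y by auto
          hence "H (Suc n) \<le> Im (mob_fun (Cay (z 0)) y)" using False unfolding E_def by auto
          thus ?thesis using Hmono[of n] by linarith
        qed
        hence "L \<le> Im (mob_fun (Cay (z 0)) y)" unfolding L_def by (intro cSUP_least) auto
        thus ?thesis using y1 unfolding E_def by simp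
      qed
    next
      fix y assume "y \<in> E L"
      thus "y \<in> (\<Inter>n\<in>{1..}. E (H n))" unfolding E_def using HL by (auto intro: order_trans)
    qed
    also have "E L = cball (complex_of_real (1 - 1/(1+L)) * z 0) (1/(1+L))"
      unfolding E_def by (rule horo[OF z01(1) L0])
    finally show "limit_disc_type f" unfolding limit_disc_type_def inter using L0
      by (intro exI[of _ "complex_of_real (1 - 1/(1+L)) * z 0"] exI[of _ "1/(1+L)"]) simp
  qed
  have G0: "G n \<ge> 0" for n using Gpos[of n] by simp
  have bmax0: "bmax \<ge> 0"
  proof -
    have "cmod (bt 1) \<le> bmax" using bbounds[of 1] by simp
    thus ?thesis by (meson norm_ge_zero order_trans)
  qed
  have bdd_iff: "bdd_above (range H) \<longleftrightarrow> summable G"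
  proof
    assume "bdd_above (range H)"
    then obtain M where M: "\<And>n. H n \<le> M" by (auto simp: bdd_above_def)
    have "(\<Sum>k<n. G k) \<le> M / bmin" for n
    proof -
      have "bmin * (\<Sum>k<n. G k) \<le> M" using Hbounds[of n] M[of n] by linarith
      thus ?thesis using bmin0 by (simp add: pos_le_divide_eq mult.commute)
    qed
    thus "summable G" using G0 by (intro summableI_nonneg_bounded)
  next
    assume sG: "summable G"
    have "H n \<le> bmax * suminf G" for n
    proof -
      have "(\<Sum>k<n. G k) \<le> suminf G" using sG G0 by (intro sum_le_suminf) auto
      hence "bmax * (\<Sum>k<n. G k) \<le> bmax * suminf G" using bmax0 by (rule mult_left_mono)
      thus ?thesis using Hbounds[of n] by linarith
    qed
    thus "bdd_above (range H)" by (rule bdd_aboveI2)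
  qed
  have stmt: "(\<lambda>n. \<Prod>k=1..Suc n. 1 / cmod (deriv (mob_fun (f k)) (z k))) = (\<lambda>n. G (Suc n))"
  proof
    fix n
    have "G (Suc n) = (\<Prod>k=1..Suc n. A k)" unfolding G_def by (rule gam_prod)
    also have "\<dots> = (\<Prod>k=1..Suc n. 1 / cmod (deriv (mob_fun (f k)) (z k)))"
      by (rule prod.cong) (auto intro: Aderiv)
    finally show "(\<Prod>k=1..Suc n. 1 / cmod (deriv (mob_fun (f k)) (z k))) = G (Suc n)" by simp
  qed
  have part1: "limit_disc_type f \<longleftrightarrow> summable (\<lambda>n. \<Prod>k=1..Suc n. 1 / cmod (deriv (mob_fun (f k)) (z k)))"
    unfolding stmt summable_Suc_iff ldt_iff bdd_iff ..
  have part2: "\<forall>q. limit_disc_type f \<and> converges_ideally f q \<longrightarrow> q \<noteq> Some (z 0)"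
  proof (intro allI impI)
    fix q assume h: "limit_disc_type f \<and> converges_ideally f q"
    show "q \<noteq> Some (z 0)"
    proof
      assume q: "q = Some (z 0)"
      have sG: "summable G" using h ldt_iff bdd_iff by blast
      have G0lim: "G \<longlonglongrightarrow> 0" by (rule summable_LIMSEQ_zero[OF sG])
      have nb: "norm (complex_of_real (G n) * bt (Suc n)) \<le> bmax * G n" for n
      proof -
        have "norm (complex_of_real (G n) * bt (Suc n)) = G n * cmod (bt (Suc n))" using G0[of n] by (simp add: norm_mult)
        also have "\<dots> \<le> G n * bmax" using bbounds[of "Suc n"] G0[of n] by (intro mult_left_mono) auto
        finally show ?thesis by (simp add: mult.commute)
      qed
      have sB: "summable (\<lambda>k. complex_of_real (G k) * bt (Suc k))"
        by (rule summable_comparison_test[where g="\<lambda>k. bmax * G k"]) (use nb summable_mult[OF sG] in auto)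
      define Binf where "Binf = suminf (\<lambda>k. complex_of_real (G k) * bt (Suc k))"
      have Beq: "B = (\<lambda>n. \<Sum>k<n. complex_of_real (G k) * bt (Suc k))"
        unfolding B_def G_def using bsum_sum by blast
      have Blim: "B \<longlonglongrightarrow> Binf" unfolding Beq Binf_def by (rule summable_LIMSEQ[OF sB])
      have ImB: "Im Binf \<ge> 0"
      proof -
        have "(\<lambda>n. Im (B n)) \<longlonglongrightarrow> Im Binf" by (rule tendsto_Im[OF Blim])
        moreover have "\<forall>n\<ge>0. 0 \<le> Im (B n)" using Hnn unfolding H_def by simp
        ultimately show ?thesis by (intro LIMSEQ_le_const) auto
      qed
      have P3: "\<forall>x t. t > 0 \<longrightarrow> snd (ext_comp_seq f n (x,t)) > 0 \<and>
          poincare_ext (Cay (z 0)) (ext_comp_seq f n (x,t))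
            = (complex_of_real (G n) * fst (poincare_ext (Cay (z n)) (x,t)) + B n, G n * snd (poincare_ext (Cay (z n)) (x,t)))" for n
      proof (induction n)
        case 0 thus ?case unfolding G_def B_def by simp
      next
        case (Suc n)
        show ?case
        proof (intro allI impI)
          fix x :: complex and t :: real assume t: "t > 0"
          have F: "in_MD (f (Suc n))" "cmod (z (Suc n)) = 1" "cmod (mob_fun (f (Suc n)) (z (Suc n))) = 1"
            using fk[of "Suc n"] by auto
          have im: "mob_fun (f (Suc n)) (z (Suc n)) = z n" using fk[of "Suc n"] by simp
          have C: "\<forall>x t. t > 0 \<longrightarrow> snd (poincare_ext (f (Suc n)) (x,t)) > 0 \<and>
            poincare_ext (Cay (z n)) (poincare_ext (f (Suc n)) (x,t))
              = (alpha (f (Suc n)) (z (Suc n)) * fst (poincare_ext (Cay (z (Suc n))) (x,t)) + bt (Suc n),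
                 Re (alpha (f (Suc n)) (z (Suc n))) * snd (poincare_ext (Cay (z (Suc n))) (x,t)))"
            using conj_g[OF F] unfolding im bt_def by blast
          obtain x' t' where xt: "poincare_ext (f (Suc n)) (x,t) = (x',t')" by (cases "poincare_ext (f (Suc n)) (x,t)")
          have t': "t' > 0" using C[rule_format, where x=x and t=t, OF t] xt by simp
          have c2: "poincare_ext (Cay (z n)) (x',t')
              = (complex_of_real (A (Suc n)) * fst (poincare_ext (Cay (z (Suc n))) (x,t)) + bt (Suc n),
                 A (Suc n) * snd (poincare_ext (Cay (z (Suc n))) (x,t)))"
            using C[rule_format, where x=x and t=t, OF t] xt Areal[of "Suc n"] unfolding A_def by simp
          have IH: "snd (ext_comp_seq f n (x',t')) > 0 \<and>
            poincare_ext (Cay (z 0)) (ext_comp_seq f n (x',t'))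
            = (complex_of_real (G n) * fst (poincare_ext (Cay (z n)) (x',t')) + B n, G n * snd (poincare_ext (Cay (z n)) (x',t')))"
            using Suc.IH t' by blast
          have e: "ext_comp_seq f (Suc n) (x,t) = ext_comp_seq f n (x',t')" using xt by simp
          show "snd (ext_comp_seq f (Suc n) (x,t)) > 0 \<and>
            poincare_ext (Cay (z 0)) (ext_comp_seq f (Suc n) (x,t))
            = (complex_of_real (G (Suc n)) * fst (poincare_ext (Cay (z (Suc n))) (x,t)) + B (Suc n),
               G (Suc n) * snd (poincare_ext (Cay (z (Suc n))) (x,t)))"
            unfolding e using IH c2 unfolding G_def B_def by (simp add: algebra_simps)
        qed
      qed
      define Pn where "Pn n = ext_comp_seq f n (0,1)" for n
      have PC: "poincare_ext (Cay (z 0)) (Pn n) = (B n, G n)" and Ppos: "snd (Pn n) > 0" for n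
      proof -
        have c: "poincare_ext (Cay (z n)) (0,1) = (0,1)" using cay_ext01 z1 by blast
        show "snd (Pn n) > 0" using P3[of n] unfolding Pn_def by simp
        show "poincare_ext (Cay (z 0)) (Pn n) = (B n, G n)" using P3[of n] c unfolding Pn_def by simp
      qed
      have Pe: "Pn n = poincare_ext (Cayi (z 0)) (B n, G n)" for n
      proof -
        obtain x t where xt: "Pn n = (x,t)" by (cases "Pn n")
        have t: "t > 0" using Ppos[of n] xt by simp
        have "poincare_ext (Cayi (z 0)) (poincare_ext (Cay (z 0)) (x,t)) = (x,t)" by (rule ext_cayi_cay[OF z01(2) t])
        thus ?thesis using PC[of n] xt by simp
      qed
      have Plim: "Pn \<longlonglongrightarrow> (mob_fun (Cayi (z 0)) Binf, 0)"
        unfolding Pe by (rule cayi_ext_lim[OF Blim G0lim ImB z01(2)])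
      have l1: "(\<lambda>n. chordal (Some (Pn n)) (Some (z 0, 0))) \<longlonglongrightarrow> chordal (Some (mob_fun (Cayi (z 0)) Binf, 0)) (Some (z 0, 0))"
        by (rule chord_lim[OF Plim])
      have l2: "(\<lambda>n. chordal (Some (Pn n)) (Some (z 0, 0))) \<longlonglongrightarrow> 0"
        using h q unfolding converges_ideally_def Pn_def by simp
      have "chordal (Some (mob_fun (Cayi (z 0)) Binf, 0)) (Some (z 0, 0)) = 0" using LIMSEQ_unique[OF l1 l2] .
      moreover have "chordal (Some (mob_fun (Cayi (z 0)) Binf, 0)) (Some (z 0, 0)) > 0"
      proof -
        have ne: "mob_fun (Cayi (z 0)) Binf - z 0 \<noteq> 0" using cayi_ne[OF z01(2)] by simp
        have pos: "(1 + sqnorm3 p) * (1 + sqnorm3 q) > 0" for p q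
          unfolding sqnorm3_def by (intro mult_pos_pos add_pos_nonneg) auto
        show ?thesis unfolding chordal.simps using ne pos[of "(mob_fun (Cayi (z 0)) Binf, 0)" "(z 0, 0)"]
          by (intro divide_pos_pos mult_pos_pos) auto
      qed
      ultimately show False by linarith
    qed
  qed
  show ?thesis using part1 part2 by blast
qed

end
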